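(* Let $\alpha,\beta\in(0,1]$ and let $L(t,u,v,w):\mathbb{T}^\kappa\times\mathbb{R}^3\to\mathbb{R}$ have continuous second-order partial derivatives in $(u,v,w)$. Consider problem (P): minimize $$\mathcal{L}(y)=\sum_{t=a}^{b-1}L\bigl(t,y(t+1),({}_a\Delta_t^\alpha y)(t),({}_t\Delta_b^\beta y)(t)\bigr)$$ over $y:\mathbb{T}\to\mathbb{R}$ with $y(a)=A$, $y(b)=B$ ($A,B\in\mathbb{R}$ fixed). If $\tilde y$ is a local minimizer for (P), then for all $t\in\mathbb{T}^{\kappa^2}=\{a,\dots,b-2\}$, $$L_u[\tilde y](t)+\bigl({}_t\Delta_{\rho(b)}^{\alpha}L_v[\tilde y]\bigr)(t)+\bigl({}_a\Delta_t^{\beta}L_w[\tilde y]\bigr)(t)=0,$$ where $[y](s)=(s,y(s+1),({}_a\Delta_s^\alpha y)(s),({}_s\Delta_b^\beta y)(s))$ and $L_v[\tilde y]$, $L_w[\tilde y]$ denote the functions $s\mapsto L_v([\tilde y](s))$, $s\mapsto L_w([\tilde y](s))$ on $\{a,\dots,b-1\}$.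
   Context: Let $a\in\mathbb{R}$, $b=a+k$ with $k\in\mathbb{N}$, $k\ge2$, $\mathbb{T}=\{a,\dots,b\}$, $\mathbb{T}^\kappa=\{a,\dots,b-1\}$, $\sigma(t)=t+1$, $\rho(t)=t-1$, $\Delta g(t)=g(t+1)-g(t)$. For real $x,y$, $x^{(y)}:=\Gamma(x+1)/\Gamma(x+1-y)$ (division at a pole yields zero). For $c\in\mathbb{T}$, $g$ on $\{a,\dots,c\}$, $\nu\ge0$: $({}_a\Delta_t^{-\nu}g)(t):=g(t)+\frac{\nu}{\Gamma(\nu+1)}\sum_{s=a}^{t-1}(t+\nu-\sigma(s))^{(\nu-1)}g(s)$ and $({}_t\Delta_c^{-\nu}g)(t):=g(t)+\frac{\nu}{\Gamma(\nu+1)}\sum_{s=t+1}^{c}(s+\nu-\sigma(t))^{(\nu-1)}g(s)$, $t\in\{a,\dots,c\}$. For $0<\alpha\le1$, $\mu=1-\alpha$, and $t\in\{a,\dots,c-1\}$: $({}_a\Delta_t^{\alpha}g)(t):=\Delta({}_a\Delta^{-\mu}g)(t)$, $({}_t\Delta_c^{\alpha}g)(t):=-\Delta({}_t\Delta_c^{-\mu}g)(t)$. Norm on functions $y:\mathbb{T}\to\mathbb{R}$: $\|y\|=\max_{t\in\mathbb{T}^\kappa}|y(t+1)|+\max_{t\in\mathbb{T}^\kappa}|({}_a\Delta_t^\alpha y)(t)|+\max_{t\in\mathbb{T}^\kappa}|({}_t\Delta_b^\beta y)(t)|$. A function $\tilde y$ with $\tilde y(a)=A$, $\tilde y(b)=B$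 is a local minimizer for (P) if there is $\delta>0$ with $\mathcal{L}(\tilde y)\le\mathcal{L}(y)$ for all $y$ with $y(a)=A$, $y(b)=B$, $\|y-\tilde y\|<\delta$. *)

theory Defs
  imports "HOL-Analysis.Analysis"
begin

text \<open>Time scale T = {a, a+1, ..., a+k} (b = a+k) and T^kappa = {a, ..., a+k-1}.\<close>

definition tscale :: "real \<Rightarrow> nat \<Rightarrow> real set" where
  "tscale a k = (\<lambda>i. a + real i) ` {0..k}"

definition tscale_kappa :: "real \<Rightarrow> nat \<Rightarrow> real set" where
  "tscale_kappa a k = (\<lambda>i. a + real i) ` {0..<k}"

text \<open>Generalized falling power x^(y) = Gamma(x+1)/Gamma(x+1-y).  In HOL-Analysis
  Gamma is 0 at its poles and division by 0 is 0, so division at a pole yields zero.\<close>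

definition gpow :: "real \<Rightarrow> real \<Rightarrow> real" where
  "gpow x y = Gamma (x + 1) / Gamma (x + 1 - y)"

definition left_fsum :: "real \<Rightarrow> real \<Rightarrow> (real \<Rightarrow> real) \<Rightarrow> real \<Rightarrow> real" where
  "left_fsum a \<nu> g t = g t + \<nu> / Gamma (\<nu> + 1) *
     (\<Sum>i\<in>{0..<nat \<lfloor>t - a\<rfloor>}. gpow (t + \<nu> - (a + real i + 1)) (\<nu> - 1) * g (a + real i))"

definition right_fsum :: "real \<Rightarrow> real \<Rightarrow> (real \<Rightarrow> real) \<Rightarrow> real \<Rightarrow> real" where
  "right_fsum c \<nu> g t = g t + \<nu> / Gamma (\<nu> + 1) *
     (\<Sum>i\<in>{1..nat \<lfloor>c - t\<rfloor>}. gpow ((t + real i) + \<nu> - (t + 1)) (\<nu> - 1) * g (t + real i))"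

definition left_fdiff :: "real \<Rightarrow> real \<Rightarrow> (real \<Rightarrow> real) \<Rightarrow> real \<Rightarrow> real" where
  "left_fdiff a \<alpha> g t = left_fsum a (1 - \<alpha>) g (t + 1) - left_fsum a (1 - \<alpha>) g t"

definition right_fdiff :: "real \<Rightarrow> real \<Rightarrow> (real \<Rightarrow> real) \<Rightarrow> real \<Rightarrow> real" where
  "right_fdiff c \<alpha> g t = - (right_fsum c (1 - \<alpha>) g (t + 1) - right_fsum c (1 - \<alpha>) g t)"

definition fnorm :: "real \<Rightarrow> nat \<Rightarrow> real \<Rightarrow> real \<Rightarrow> (real \<Rightarrow> real) \<Rightarrow> real" where
  "fnorm a k \<alpha> \<beta> y =
     Max ((\<lambda>t. \<bar>y (t + 1)\<bar>) ` tscale_kappa a k)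
   + Max ((\<lambda>t. \<bar>left_fdiff a \<alpha> y t\<bar>) ` tscale_kappa a k)
   + Max ((\<lambda>t. \<bar>right_fdiff (a + real k) \<beta> y t\<bar>) ` tscale_kappa a k)"

definition funct ::
  "(real \<Rightarrow> real \<Rightarrow> real \<Rightarrow> real \<Rightarrow> real) \<Rightarrow> real \<Rightarrow> nat \<Rightarrow> real \<Rightarrow> real \<Rightarrow> (real \<Rightarrow> real) \<Rightarrow> real" where
  "funct L a k \<alpha> \<beta> y =
     (\<Sum>i<k. L (a + real i) (y (a + real i + 1))
                (left_fdiff a \<alpha> y (a + real i)) (right_fdiff (a + real k) \<beta> y (a + real i)))"

definition local_minimizer ::
  "(real \<Rightarrow> real \<Rightarrow> real \<Rightarrow> real \<Rightarrow> real) \<Rightarrow> real \<Rightarrow> nat \<Rightarrow> real \<Rightarrow> real \<Rightarrow> real \<Rightarrow> real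
   \<Rightarrow> (real \<Rightarrow> real) \<Rightarrow> bool" where
  "local_minimizer L a k \<alpha> \<beta> A B yt \<longleftrightarrow>
     yt a = A \<and> yt (a + real k) = B \<and>
     (\<exists>\<delta>>0. \<forall>y. y a = A \<and> y (a + real k) = B \<and> fnorm a k \<alpha> \<beta> (\<lambda>t. y t - yt t) < \<delta>
               \<longrightarrow> funct L a k \<alpha> \<beta> yt \<le> funct L a k \<alpha> \<beta> y)"

definition cont_partials :: "(real \<Rightarrow> real \<Rightarrow> real \<Rightarrow> real) \<Rightarrow> bool" where
  "cont_partials f \<longleftrightarrow> (\<exists>fu fv fw.
     (\<forall>u v w. ((\<lambda>x. f x v w) has_real_derivative fu u v w) (at u)
            \<and> ((\<lambda>x. f u x w) has_real_derivative fv u v w) (at v)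
            \<and> ((\<lambda>x. f u v x) has_real_derivative fw u v w) (at w))
     \<and> continuous_on UNIV (\<lambda>(u, v, w). fu u v w)
     \<and> continuous_on UNIV (\<lambda>(u, v, w). fv u v w)
     \<and> continuous_on UNIV (\<lambda>(u, v, w). fw u v w))"

end

theory Submission
  imports Defs
begin


lemma chain2:
  fixes g gv gw :: "real \<Rightarrow> real \<Rightarrow> real"
  assumes dv: "\<And>v w. ((\<lambda>x. g x w) has_real_derivative gv v w) (at v)"
    and dw: "\<And>v w. ((\<lambda>x. g v x) has_real_derivative gw v w) (at w)"
    and cw: "continuous_on UNIV (\<lambda>(v, w). gw v w)"
  shows "((\<lambda>(v, w). g v w) has_derivative (\<lambda>(dv, dw). gv v w * dv + gw v w * dw)) (at (v, w))"
proof -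
  have c: "continuous (at (v, w) within UNIV \<times> UNIV) (\<lambda>(x, y). blinfun_mult_left (gw x y))"
  proof -
    have "continuous (at (v, w)) (\<lambda>(x, y). gw x y)"
      using cw by (simp add: continuous_on_eq_continuous_at)
    then have "continuous (at (v, w)) (\<lambda>p. blinfun_mult_left ((\<lambda>(x, y). gw x y) p))"
      by (intro continuous_intros bounded_linear.continuous[OF bounded_linear_blinfun_mult_left])
    then show ?thesis by (simp add: split_beta')
  qed
  have "((\<lambda>(x, y). g x y) has_derivative (\<lambda>(tx, ty). (\<lambda>h. gv v w * h) tx + blinfun_mult_left (gw v w) ty)) (at (v, w) within UNIV \<times> UNIV)"
    apply (rule has_derivative_partialsI[where fy = "\<lambda>x y. blinfun_mult_left (gw x y)"])
    using dv[unfolded has_field_derivative_def] apply simp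
    using dw[unfolded has_field_derivative_def] apply (simp add: mult.commute[of _ "gw _ _"])
    using c apply simp
     apply simp apply simp done
  then show ?thesis by (simp add: mult.commute case_prod_beta)
qed

lemma chain3:
  fixes g gu gv gw :: "real \<Rightarrow> real \<Rightarrow> real \<Rightarrow> real"
  assumes du: "\<And>u v w. ((\<lambda>x. g x v w) has_real_derivative gu u v w) (at u)"
    and dv: "\<And>u v w. ((\<lambda>x. g u x w) has_real_derivative gv u v w) (at v)"
    and dw: "\<And>u v w. ((\<lambda>x. g u v x) has_real_derivative gw u v w) (at w)"
    and cv: "continuous_on UNIV (\<lambda>(u, v, w). gv u v w)"
    and cw: "continuous_on UNIV (\<lambda>(u, v, w). gw u v w)"
  shows "((\<lambda>(u, v, w). g u v w) has_derivative
           (\<lambda>(du, dv, dw). gu u v w * du + gv u v w * dv + gw u v w * dw)) (at (u, v, w))"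
proof -
  define fy :: "real \<Rightarrow> real \<times> real \<Rightarrow> (real \<times> real) \<Rightarrow>\<^sub>L real" where "fy = (\<lambda>x (y::real\<times>real). gv x (fst y) (snd y) *\<^sub>R fst_blinfun + gw x (fst y) (snd y) *\<^sub>R snd_blinfun)"
  have ap: "blinfun_apply (fy x y) = (\<lambda>(dv, dw). gv x (fst y) (snd y) * dv + gw x (fst y) (snd y) * dw)" for x y
    by (auto simp: fy_def blinfun.add_left blinfun.scaleR_left)
  have cwx: "continuous_on UNIV (\<lambda>(v, w). gw x v w)" for x
  proof -
    have "continuous_on UNIV ((\<lambda>(u, v, w). gw u v w) \<circ> (\<lambda>(v, w). (x, v, w)))"
      by (intro continuous_on_compose continuous_on_subset[OF cw]) (auto simp: split_beta' intro!: continuous_intros)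
    then show ?thesis by (simp add: o_def split_beta')
  qed
  have inner: "((\<lambda>y. g x (fst y) (snd y)) has_derivative blinfun_apply (fy x y)) (at y)" for x y
  proof -
    obtain v w where y: "y = (v, w)" by (cases y)
    have "((\<lambda>(v, w). g x v w) has_derivative (\<lambda>(dv, dw). gv x v w * dv + gw x v w * dw)) (at (v, w))"
      by (rule chain2[OF dv dw cwx])
    then show ?thesis by (simp add: ap y split_beta')
  qed
  have c: "continuous (at (u, (v, w)) within UNIV \<times> UNIV) (\<lambda>(x, y). fy x y)"
  proof -
    have a: "continuous (at (u, v, w)) (\<lambda>(u, v, w). gv u v w)"
      using cv by (simp add: continuous_on_eq_continuous_at)
    have b: "continuous (at (u, v, w)) (\<lambda>(u, v, w). gw u v w)"
      using cw by (simp add: continuous_on_eq_continuous_at)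
    have "continuous (at (u, v, w)) (\<lambda>p. (\<lambda>(u, v, w). gv u v w) p *\<^sub>R fst_blinfun + (\<lambda>(u, v, w). gw u v w) p *\<^sub>R snd_blinfun)"
      by (intro continuous_intros a b)
    then show ?thesis by (simp add: fy_def split_beta')
  qed
  have "((\<lambda>(x, y). g x (fst y) (snd y)) has_derivative (\<lambda>(tx, ty). (\<lambda>h. gu u v w * h) tx + blinfun_apply (fy u (v, w)) ty)) (at (u, (v, w)) within UNIV \<times> UNIV)"
    apply (rule has_derivative_partialsI[where fy = fy])
    using du[unfolded has_field_derivative_def] apply simp
    using inner apply simp
    using c apply simp
     apply simp apply simp done
  then show ?thesis by (simp add: ap split_beta' algebra_simps)
qed

lemma dir_deriv:
  fixes g gu gv gw :: "real \<Rightarrow> real \<Rightarrow> real \<Rightarrow> real"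
  assumes du: "\<And>u v w. ((\<lambda>x. g x v w) has_real_derivative gu u v w) (at u)"
    and dv: "\<And>u v w. ((\<lambda>x. g u x w) has_real_derivative gv u v w) (at v)"
    and dw: "\<And>u v w. ((\<lambda>x. g u v x) has_real_derivative gw u v w) (at w)"
    and cv: "continuous_on UNIV (\<lambda>(u, v, w). gv u v w)"
    and cw: "continuous_on UNIV (\<lambda>(u, v, w). gw u v w)"
  shows "((\<lambda>e. g (u + e * p) (v + e * q) (w + e * r)) has_real_derivative
           (p * gu u v w + q * gv u v w + r * gw u v w)) (at 0)"
proof -
  have D: "((\<lambda>(u, v, w). g u v w) has_derivative
           (\<lambda>(du, dv, dw). gu u v w * du + gv u v w * dv + gw u v w * dw)) (at ((\<lambda>e. (u + e * p, v + e * q, w + e * r)) 0))"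
    using chain3[OF du dv dw cv cw] by simp
  have P: "((\<lambda>e. (u + e * p, v + e * q, w + e * r)) has_derivative (\<lambda>h. (h * p, h * q, h * r))) (at 0)"
    by (auto intro!: derivative_eq_intros)
  have "((\<lambda>(u, v, w). g u v w) \<circ> (\<lambda>e. (u + e * p, v + e * q, w + e * r)) has_derivative
        (\<lambda>(du, dv, dw). gu u v w * du + gv u v w * dv + gw u v w * dw) \<circ> (\<lambda>h. (h * p, h * q, h * r))) (at 0)"
    by (rule diff_chain_at[OF P D])
  then have "((\<lambda>e. g (u + e * p) (v + e * q) (w + e * r)) has_derivative
     (\<lambda>h. gu u v w * (h * p) + gv u v w * (h * q) + gw u v w * (h * r))) (at 0)"
    by (simp add: o_def)
  then show ?thesis
    unfolding has_field_derivative_def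
    by (rule has_derivative_eq_rhs) (auto simp: o_def fun_eq_iff algebra_simps)
qed



lemma shift_sum: "(\<Sum>i\<in>{1..K}. h (n + i)) = (\<Sum>l\<in>{Suc n..<n + K + 1}. (h l :: real))"
  by (rule sum.reindex_bij_witness[of _ "\<lambda>l. l - n" "\<lambda>i. n + i"]) auto

lemma sum_filter_lt: "m \<le> (k::nat) \<Longrightarrow> (\<Sum>i<k. if i < m then f i else 0) = (\<Sum>i<m. (f i :: real))"
proof -
  assume "m \<le> k"
  have "(\<Sum>i<k. if i < m then f i else 0) = sum f {i\<in>{..<k}. i < m}"
    by (rule sum.inter_filter[symmetric]) simp
  also have "{i\<in>{..<k}. i < m} = {..<m}" using \<open>m \<le> k\<close> by auto
  finally show ?thesis .
qed

lemma sum_filter_ge: "(\<Sum>i<(k::nat). if m \<le> i then f i else 0) = (\<Sum>i\<in>{m..<k}. (f i :: real))"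
proof -
  have "(\<Sum>i<k. if m \<le> i then f i else 0) = sum f {i\<in>{..<k}. m \<le> i}"
    by (rule sum.inter_filter[symmetric]) simp
  also have "{i\<in>{..<k}. m \<le> i} = {m..<k}" by auto
  finally show ?thesis .
qed

lemma sbp1:
  fixes V Gr :: "_ \<Rightarrow> real" and c :: real
  assumes m: "m < k" "0 < m"
    and F_def: "\<And>n. F n = (if n = m then 1 else 0) + c * (if m < n then Gr (real n - real m - 1) else 0)"
    and R_def: "\<And>n. n < k \<Longrightarrow> R n = V n + c * (\<Sum>i\<in>{1..k-1-n}. Gr (real i - 1) * V (n + i))"
  shows "(\<Sum>i<k. V i * (F (Suc i) - F i)) = R (m - 1) - R m"
proof -
  have R1: "R (m - 1) = V (m - 1) + c * (\<Sum>l\<in>{m..<k}. Gr (real l - real m) * V l)"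
  proof -
    have "(\<Sum>i\<in>{1..k-1-(m-1)}. Gr (real i - 1) * V (m - 1 + i)) =
          (\<Sum>i\<in>{1..k-1-(m-1)}. (\<lambda>l. Gr (real l - real m) * V l) (m - 1 + i))"
      using m by (intro sum.cong) (auto simp: of_nat_diff)
    also have "\<dots> = (\<Sum>l\<in>{m..<k}. Gr (real l - real m) * V l)"
      using m by (subst shift_sum) (auto intro!: sum.cong)
    finally show ?thesis using m by (simp add: R_def)
  qed
  have R2: "R m = V m + c * (\<Sum>l\<in>{Suc m..<k}. Gr (real l - real m - 1) * V l)"
  proof -
    have "(\<Sum>i\<in>{1..k-1-m}. Gr (real i - 1) * V (m + i)) =
          (\<Sum>i\<in>{1..k-1-m}. (\<lambda>l. Gr (real l - real m - 1) * V l) (m + i))"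
      by (intro sum.cong) auto
    also have "\<dots> = (\<Sum>l\<in>{Suc m..<k}. Gr (real l - real m - 1) * V l)"
      using m by (subst shift_sum) (auto intro!: sum.cong)
    finally show ?thesis using m by (simp add: R_def)
  qed
  have S1: "(\<Sum>i<k. V i * F (Suc i)) = V (m - 1) + c * (\<Sum>l\<in>{m..<k}. Gr (real l - real m) * V l)"
  proof -
    have "(\<Sum>i<k. V i * F (Suc i)) = (\<Sum>i<k. if i = m - 1 then V i else 0) + c * (\<Sum>i<k. if m \<le> i then Gr (real i - real m) * V i else 0)"
      unfolding sum_distrib_left sum.distrib[symmetric]
      using m by (intro sum.cong) (auto simp: F_def algebra_simps)
    also have "\<dots> = V (m - 1) + c * (\<Sum>l\<in>{m..<k}. Gr (real l - real m) * V l)"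
      using m by (auto simp add: sum_filter_ge)
    finally show ?thesis .
  qed
  have S2: "(\<Sum>i<k. V i * F i) = V m + c * (\<Sum>l\<in>{Suc m..<k}. Gr (real l - real m - 1) * V l)"
  proof -
    have "(\<Sum>i<k. V i * F i) = (\<Sum>i<k. if i = m then V i else 0) + c * (\<Sum>i<k. if Suc m \<le> i then Gr (real i - real m - 1) * V i else 0)"
      unfolding sum_distrib_left sum.distrib[symmetric]
      using m by (intro sum.cong) (auto simp: F_def algebra_simps)
    also have "\<dots> = V m + c * (\<Sum>l\<in>{Suc m..<k}. Gr (real l - real m - 1) * V l)"
      using m by (auto simp add: sum_filter_ge)
    finally show ?thesis .
  qed
  show ?thesis using S1 S2 R1 R2 by (simp add: right_diff_distrib sum_subtractf)
qed

lemma sbp2: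
  fixes W Gr :: "_ \<Rightarrow> real" and c :: real
  assumes m: "m < k" "0 < m"
    and H_def: "\<And>n. n \<le> k \<Longrightarrow> H n = (if n = m then 1 else 0) + c * (if n < m then Gr (real m - real n - 1) else 0)"
    and P_def: "\<And>n. P n = W n + c * (\<Sum>i<n. Gr (real n - real i - 1) * W i)"
  shows "(\<Sum>i<k. W i * (H i - H (Suc i))) = P m - P (m - 1)"
proof -
  have S1: "(\<Sum>i<k. W i * H i) = W m + c * (\<Sum>i<m. Gr (real m - real i - 1) * W i)"
  proof -
    have "(\<Sum>i<k. W i * H i) = (\<Sum>i<k. if i = m then W i else 0) + c * (\<Sum>i<k. if i < m then Gr (real m - real i - 1) * W i else 0)"
      unfolding sum_distrib_left sum.distrib[symmetric]
      using m by (intro sum.cong) (auto simp: H_def algebra_simps)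
    also have "\<dots> = W m + c * (\<Sum>i<m. Gr (real m - real i - 1) * W i)"
      using m by (auto simp add: sum_filter_lt)
    finally show ?thesis .
  qed
  have S2: "(\<Sum>i<k. W i * H (Suc i)) = W (m - 1) + c * (\<Sum>i<m - 1. Gr (real (m - 1) - real i - 1) * W i)"
  proof -
    have "(\<Sum>i<k. W i * H (Suc i)) = (\<Sum>i<k. if i = m - 1 then W i else 0) + c * (\<Sum>i<k. if i < m - 1 then Gr (real (m - 1) - real i - 1) * W i else 0)"
      unfolding sum_distrib_left sum.distrib[symmetric]
      using m by (intro sum.cong) (auto simp: H_def algebra_simps of_nat_diff)
    also have "\<dots> = W (m - 1) + c * (\<Sum>i<m - 1. Gr (real (m - 1) - real i - 1) * W i)"
      using m by (auto simp add: sum_filter_lt)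
    finally show ?thesis .
  qed
  show ?thesis using S1 S2 by (simp add: P_def right_diff_distrib sum_subtractf)
qed



lemma lfs_at: "left_fsum a \<nu> g (a + real n) = g (a + real n) + \<nu> / Gamma (\<nu> + 1) *
   (\<Sum>i<n. gpow (real n - real i - 1 + \<nu>) (\<nu> - 1) * g (a + real i))"
proof -
  have e: "nat \<lfloor>a + real n - a\<rfloor> = n" by simp
  have s: "(\<Sum>i\<in>{0..<n}. gpow (a + real n + \<nu> - (a + real i + 1)) (\<nu> - 1) * g (a + real i)) =
        (\<Sum>i<n. gpow (real n - real i - 1 + \<nu>) (\<nu> - 1) * g (a + real i))"
    unfolding atLeast0LessThan
    apply (intro sum.cong refl arg_cong2[where f="(*)"] arg_cong2[where f=gpow])
    apply (simp add: algebra_simps)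
  done
  show ?thesis unfolding left_fsum_def e s by (rule refl)
qed

lemma rfs_at: "n \<le> K \<Longrightarrow> right_fsum (a + real K) \<nu> g (a + real n) = g (a + real n) + \<nu> / Gamma (\<nu> + 1) *
   (\<Sum>i\<in>{1..K - n}. gpow (real i - 1 + \<nu>) (\<nu> - 1) * g (a + real (n + i)))"
proof -
  assume "n \<le> K"
  then have e0: "a + real K - (a + real n) = real (K - n)" by (simp add: of_nat_diff)
  have e: "nat \<lfloor>a + real K - (a + real n)\<rfloor> = K - n" unfolding e0 by simp
  have s: "(\<Sum>i\<in>{1..K - n}. gpow (a + real n + real i + \<nu> - (a + real n + 1)) (\<nu> - 1) * g (a + real n + real i)) =
     (\<Sum>i\<in>{1..K - n}. gpow (real i - 1 + \<nu>) (\<nu> - 1) * g (a + real (n + i)))"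
    apply (intro sum.cong refl arg_cong2[where f="(*)"] arg_cong2[where f=gpow] arg_cong[where f=g])
    apply (simp add: algebra_simps)
    apply (simp add: algebra_simps)
    done
  show ?thesis unfolding right_fsum_def e s by (rule refl)
qed

lemma lfs_lin: "left_fsum a \<nu> (\<lambda>t. f t + e * g t) t = left_fsum a \<nu> f t + e * left_fsum a \<nu> g t"
  unfolding left_fsum_def by (simp add: algebra_simps sum.distrib sum_distrib_left)

lemma rfs_lin: "right_fsum c \<nu> (\<lambda>t. f t + e * g t) t = right_fsum c \<nu> f t + e * right_fsum c \<nu> g t"
  unfolding right_fsum_def by (simp add: algebra_simps sum.distrib sum_distrib_left)

lemma lfd_lin: "left_fdiff a \<gamma> (\<lambda>t. f t + e * g t) t = left_fdiff a \<gamma> f t + e * left_fdiff a \<gamma> g t"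
  unfolding left_fdiff_def lfs_lin by (simp add: algebra_simps)

lemma rfd_lin: "right_fdiff c \<gamma> (\<lambda>t. f t + e * g t) t = right_fdiff c \<gamma> f t + e * right_fdiff c \<gamma> g t"
  unfolding right_fdiff_def rfs_lin by (simp add: algebra_simps)

lemma lfd_scale: "left_fdiff a \<gamma> (\<lambda>t. e * g t) t = e * left_fdiff a \<gamma> g t"
  using lfd_lin[of a \<gamma> "\<lambda>_. 0" e g t] by (simp add: left_fdiff_def left_fsum_def)

lemma rfd_scale: "right_fdiff c \<gamma> (\<lambda>t. e * g t) t = e * right_fdiff c \<gamma> g t"
  using rfd_lin[of c \<gamma> "\<lambda>_. 0" e g t] by (simp add: right_fdiff_def right_fsum_def)

lemma Max_scale:
  assumes "finite S" "S \<noteq> {}" "0 \<le> (c::real)"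
  shows "Max ((\<lambda>t. c * f t) ` S) = c * Max (f ` S)"
proof -
  have "mono ((*) c)" using assms(3) by (simp add: mono_def mult_left_mono)
  then have "c * Max (f ` S) = Max ((*) c ` f ` S)"
    by (rule mono_Max_commute) (use assms in auto)
  then show ?thesis by (simp add: image_image)
qed

lemma tk_fin: "finite (tscale_kappa a k)" by (simp add: tscale_kappa_def)
lemma tk_ne: "0 < k \<Longrightarrow> tscale_kappa a k \<noteq> {}" by (auto simp: tscale_kappa_def)

lemma fnorm_scale:
  assumes "0 < k"
  shows "fnorm a k \<alpha> \<beta> (\<lambda>t. e * g t) = \<bar>e\<bar> * fnorm a k \<alpha> \<beta> g"
proof -
  have "fnorm a k \<alpha> \<beta> (\<lambda>t. e * g t) =
     Max ((\<lambda>t. \<bar>e\<bar> * \<bar>g (t + 1)\<bar>) ` tscale_kappa a k)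
   + Max ((\<lambda>t. \<bar>e\<bar> * \<bar>left_fdiff a \<alpha> g t\<bar>) ` tscale_kappa a k)
   + Max ((\<lambda>t. \<bar>e\<bar> * \<bar>right_fdiff (a + real k) \<beta> g t\<bar>) ` tscale_kappa a k)"
    unfolding fnorm_def lfd_scale rfd_scale by (simp add: abs_mult)
  also have "\<dots> = \<bar>e\<bar> * fnorm a k \<alpha> \<beta> g"
    unfolding fnorm_def using tk_fin tk_ne[OF assms]
    by (simp add: Max_scale algebra_simps)
  finally show ?thesis .
qed

lemma fnorm_nonneg:
  assumes "0 < k" shows "0 \<le> fnorm a k \<alpha> \<beta> g"
proof -
  obtain t where t: "t \<in> tscale_kappa a k" using tk_ne[OF assms] by blast
  have "\<bar>h t\<bar> \<le> Max ((\<lambda>t. \<bar>h t\<bar>) ` tscale_kappa a k)" for h :: "real \<Rightarrow> real"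
    using t tk_fin by (intro Max_ge) auto
  then have "0 \<le> Max ((\<lambda>t. \<bar>h t\<bar>) ` tscale_kappa a k)" for h :: "real \<Rightarrow> real"
    by (rule order_trans[rotated]) simp
  then show ?thesis unfolding fnorm_def by (intro add_nonneg_nonneg) auto
qed

lemma cp_cont: assumes "cont_partials f" shows "continuous_on UNIV (\<lambda>(u, v, w). f u v w)"
proof -
  obtain fu fv fw where d: "\<forall>u v w. ((\<lambda>x. f x v w) has_real_derivative fu u v w) (at u)
            \<and> ((\<lambda>x. f u x w) has_real_derivative fv u v w) (at v)
            \<and> ((\<lambda>x. f u v x) has_real_derivative fw u v w) (at w)"
    and cv: "continuous_on UNIV (\<lambda>(u, v, w). fv u v w)"
    and cw: "continuous_on UNIV (\<lambda>(u, v, w). fw u v w)"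
    using assms unfolding cont_partials_def by blast
  have "isCont (\<lambda>(u, v, w). f u v w) x" for x
  proof -
    obtain u v w where x: "x = (u, v, w)" by (cases x)
    show ?thesis unfolding x
      by (rule has_derivative_continuous[OF chain3[of f fu fv fw]]) (use d cv cw in auto)
  qed
  then show ?thesis by (simp add: continuous_at_imp_continuous_on)
qed

lemma ind_sum1: "(\<Sum>i<(n::nat). f i * (if i = m then 1 else 0)) = (if m < n then f m else (0::real))"
proof -
  have "(\<Sum>i<n. f i * (if i = m then 1 else 0)) = (\<Sum>i<n. if i = m then f i else 0)"
    by (intro sum.cong) auto
  then show ?thesis by (simp add: sum.delta')
qed

lemma ind_sum2: "n \<le> (K::nat) \<Longrightarrow> m \<le> K \<Longrightarrow> (\<Sum>i\<in>{1..K - n}. f i * (if n + i = m then 1 else 0)) = (if n < m then f (m - n) else (0::real))"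
proof (cases "n < m")
  case True
  assume "n \<le> K" "m \<le> K"
  have "(\<Sum>i\<in>{1..K - n}. f i * (if n + i = m then 1 else 0)) = (\<Sum>i\<in>{1..K - n}. if i = m - n then f i else 0)"
  proof (intro sum.cong refl)
    fix i show "f i * (if n + i = m then 1 else 0) = (if i = m - n then f i else 0)"
      using True by (cases "n + i = m") auto
  qed
  also have "\<dots> = f (m - n)" using True \<open>m \<le> K\<close> by (auto simp add: sum.delta')
  finally show ?thesis using True by simp
next
  case False
  then show ?thesis by (intro trans[OF sum.neutral]) auto
qed



theorem theoremZ:
  fixes a A B \<alpha> \<beta> :: real and k :: nat
    and L Lu Lv Lw :: "real \<Rightarrow> real \<Rightarrow> real \<Rightarrow> real \<Rightarrow> real"
    and yt :: "real \<Rightarrow> real"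
  assumes k: "k \<ge> 2"
    and \<alpha>: "0 < \<alpha>" "\<alpha> \<le> 1"
    and \<beta>: "0 < \<beta>" "\<beta> \<le> 1"
    and Lu: "\<And>t u v w. t \<in> tscale_kappa a k \<Longrightarrow>
               ((\<lambda>x. L t x v w) has_real_derivative Lu t u v w) (at u)"
    and Lv: "\<And>t u v w. t \<in> tscale_kappa a k \<Longrightarrow>
               ((\<lambda>x. L t u x w) has_real_derivative Lv t u v w) (at v)"
    and Lw: "\<And>t u v w. t \<in> tscale_kappa a k \<Longrightarrow>
               ((\<lambda>x. L t u v x) has_real_derivative Lw t u v w) (at w)"
    and C2: "\<And>t. t \<in> tscale_kappa a k \<Longrightarrow>
               cont_partials (Lu t) \<and> cont_partials (Lv t) \<and> cont_partials (Lw t)"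
    and min: "local_minimizer L a k \<alpha> \<beta> A B yt"
  shows "\<forall>i \<le> k - 2. (let t = a + real i in
           Lu t (yt (t + 1)) (left_fdiff a \<alpha> yt t) (right_fdiff (a + real k) \<beta> yt t)
         + right_fdiff (a + real k - 1) \<alpha>
             (\<lambda>s. Lv s (yt (s + 1)) (left_fdiff a \<alpha> yt s) (right_fdiff (a + real k) \<beta> yt s)) t
         + left_fdiff a \<beta>
             (\<lambda>s. Lw s (yt (s + 1)) (left_fdiff a \<alpha> yt s) (right_fdiff (a + real k) \<beta> yt s)) t
         = 0)"
proof (intro allI impI)
  fix j assume j: "j \<le> k - 2"
  define m where "m = Suc j"
  have m: "m < k" "0 < m" using j k unfolding m_def by auto
  have k0: "0 < k" using k by simp
  define \<eta> :: "real \<Rightarrow> real" where "\<eta> = (\<lambda>s. if s = a + real m then 1 else 0)"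
  have \<eta>i: "\<eta> (a + real i) = (if i = m then 1 else 0)" for i by (simp add: \<eta>_def)
  define Uf where "Uf = (\<lambda>s. Lu s (yt (s + 1)) (left_fdiff a \<alpha> yt s) (right_fdiff (a + real k) \<beta> yt s))"
  define Vf where "Vf = (\<lambda>s. Lv s (yt (s + 1)) (left_fdiff a \<alpha> yt s) (right_fdiff (a + real k) \<beta> yt s))"
  define Wf where "Wf = (\<lambda>s. Lw s (yt (s + 1)) (left_fdiff a \<alpha> yt s) (right_fdiff (a + real k) \<beta> yt s))"
  define U where "U i = yt (a + real i + 1)" for i
  define V where "V i = left_fdiff a \<alpha> yt (a + real i)" for i
  define W where "W i = right_fdiff (a + real k) \<beta> yt (a + real i)" for i
  define P where "P i = \<eta> (a + real i + 1)" for i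
  define Q where "Q i = left_fdiff a \<alpha> \<eta> (a + real i)" for i
  define R where "R i = right_fdiff (a + real k) \<beta> \<eta> (a + real i)" for i
  define \<phi> where "\<phi> e = funct L a k \<alpha> \<beta> (\<lambda>t. yt t + e * \<eta> t)" for e
  have phi: "\<phi> e = (\<Sum>i<k. L (a + real i) (U i + e * P i) (V i + e * Q i) (W i + e * R i))" for e
    unfolding \<phi>_def funct_def lfd_lin rfd_lin U_def V_def W_def P_def Q_def R_def by simp
  have Tin: "i < k \<Longrightarrow> a + real i \<in> tscale_kappa a k" for i by (auto simp: tscale_kappa_def)
  define D where "D = (\<Sum>i<k. P i * Lu (a + real i) (U i) (V i) (W i) + Q i * Lv (a + real i) (U i) (V i) (W i)
      + R i * Lw (a + real i) (U i) (V i) (W i))"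
  have deriv: "(\<phi> has_real_derivative D) (at 0)"
    unfolding phi[abs_def] D_def
  proof (rule DERIV_sum)
    fix i assume "i \<in> {..<k}"
    then have t: "a + real i \<in> tscale_kappa a k" using Tin by simp
    show "((\<lambda>e. L (a + real i) (U i + e * P i) (V i + e * Q i) (W i + e * R i)) has_real_derivative
      P i * Lu (a + real i) (U i) (V i) (W i) + Q i * Lv (a + real i) (U i) (V i) (W i)
      + R i * Lw (a + real i) (U i) (V i) (W i)) (at 0)"
      by (rule dir_deriv[OF Lu[OF t] Lv[OF t] Lw[OF t] cp_cont cp_cont]) (use C2[OF t] in auto)
  qed
  obtain \<delta> where \<delta>: "\<delta> > 0" and ya: "yt a = A" and yb: "yt (a + real k) = B"
    and mn: "\<And>y. y a = A \<Longrightarrow> y (a + real k) = B \<Longrightarrow> fnorm a k \<alpha> \<beta> (\<lambda>t. y t - yt t) < \<delta>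
               \<Longrightarrow> funct L a k \<alpha> \<beta> yt \<le> funct L a k \<alpha> \<beta> y"
    using min unfolding local_minimizer_def by blast
  define N where "N = fnorm a k \<alpha> \<beta> \<eta>"
  have N0: "0 \<le> N" unfolding N_def by (rule fnorm_nonneg[OF k0])
  have "D = 0"
  proof (rule DERIV_local_min[OF deriv])
    show "0 < \<delta> / (N + 1)" using \<delta> N0 by simp
    show "\<forall>e. \<bar>0 - e\<bar> < \<delta> / (N + 1) \<longrightarrow> \<phi> 0 \<le> \<phi> e"
    proof (intro allI impI)
      fix e assume e: "\<bar>0 - e\<bar> < \<delta> / (N + 1)"
      have "\<eta> a = 0" using m by (simp add: \<eta>_def)
      moreover have "\<eta> (a + real k) = 0" using m by (simp add: \<eta>_def)
      moreover have "fnorm a k \<alpha> \<beta> (\<lambda>t. (yt t + e * \<eta> t) - yt t) < \<delta>"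
      proof -
        have "fnorm a k \<alpha> \<beta> (\<lambda>t. (yt t + e * \<eta> t) - yt t) = \<bar>e\<bar> * N"
          unfolding N_def by (simp add: fnorm_scale[OF k0])
        also have "\<dots> \<le> \<bar>e\<bar> * (N + 1)" by (simp add: mult_left_mono)
        also have "\<dots> < \<delta>" using e N0 by (simp add: pos_less_divide_eq)
        finally show ?thesis .
      qed
      ultimately have "funct L a k \<alpha> \<beta> yt \<le> \<phi> e"
        unfolding \<phi>_def by (intro mn) (auto simp: ya yb)
      then show "\<phi> 0 \<le> \<phi> e" by (simp add: \<phi>_def)
    qed
  qed
  define LU where "LU n = Uf (a + real n)" for n
  define LV where "LV n = Vf (a + real n)" for n
  define LW where "LW n = Wf (a + real n)" for n
  have sucr: "a + real i + 1 = a + real (Suc i)" for i by simp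
  have Dsplit: "D = (\<Sum>i<k. LU i * P i) + (\<Sum>i<k. LV i * Q i) + (\<Sum>i<k. LW i * R i)"
    unfolding D_def sum.distrib[symmetric] LU_def LV_def LW_def Uf_def Vf_def Wf_def U_def V_def W_def
    by (intro sum.cong) (simp_all add: algebra_simps)
  have Upart: "(\<Sum>i<k. LU i * P i) = LU j"
  proof -
    have "(\<Sum>i<k. LU i * P i) = (\<Sum>i<k. LU i * (if i = j then 1 else 0))"
    proof (intro sum.cong refl)
      fix i have "P i = (if i = j then 1 else 0)" unfolding P_def sucr \<eta>i m_def by simp
      then show "LU i * P i = LU i * (if i = j then 1 else 0)" by simp
    qed
    then show ?thesis using m by (simp add: ind_sum1 m_def)
  qed
  define \<nu>1 where "\<nu>1 = 1 - \<alpha>"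
  define c1 where "c1 = \<nu>1 / Gamma (\<nu>1 + 1)"
  define Gr1 where "Gr1 x = gpow (x + \<nu>1) (\<nu>1 - 1)" for x
  define F where "F n = left_fsum a \<nu>1 \<eta> (a + real n)" for n
  have Fc: "F n = (if n = m then 1 else 0) + c1 * (if m < n then Gr1 (real n - real m - 1) else 0)" for n
    unfolding F_def lfs_at \<eta>i ind_sum1 c1_def Gr1_def by simp
  have Qc: "Q i = F (Suc i) - F i" for i
    unfolding Q_def left_fdiff_def F_def \<nu>1_def sucr ..
  define Rs where "Rs n = right_fsum (a + real k - 1) \<nu>1 Vf (a + real n)" for n
  have ak1: "a + real k - 1 = a + real (k - 1)" using m by (simp add: of_nat_diff)
  have Rsc: "Rs n = LV n + c1 * (\<Sum>i\<in>{1..k - 1 - n}. Gr1 (real i - 1) * LV (n + i))" if "n < k" for n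
    unfolding Rs_def ak1 using that by (subst rfs_at) (auto simp: LV_def c1_def Gr1_def)
  have S1: "(\<Sum>i<k. LV i * (F (Suc i) - F i)) = Rs (m - 1) - Rs m"
    by (rule sbp1[where F=F and R=Rs and V=LV and c=c1 and Gr=Gr1, OF m Fc Rsc])
  have Vpart: "(\<Sum>i<k. LV i * Q i) = right_fdiff (a + real k - 1) \<alpha> Vf (a + real j)"
    unfolding Qc S1 right_fdiff_def using m by (simp add: Rs_def \<nu>1_def sucr m_def)
  define \<nu>2 where "\<nu>2 = 1 - \<beta>"
  define c2 where "c2 = \<nu>2 / Gamma (\<nu>2 + 1)"
  define Gr2 where "Gr2 x = gpow (x + \<nu>2) (\<nu>2 - 1)" for x
  define H where "H n = right_fsum (a + real k) \<nu>2 \<eta> (a + real n)" for n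
  have Hc: "H n = (if n = m then 1 else 0) + c2 * (if n < m then Gr2 (real m - real n - 1) else 0)" if "n \<le> k" for n
  proof -
    have "H n = (if n = m then 1 else 0) + c2 * (\<Sum>i\<in>{1..k - n}. gpow (real i - 1 + \<nu>2) (\<nu>2 - 1) * (if n + i = m then 1 else 0))"
      unfolding H_def rfs_at[OF that] \<eta>i c2_def ..
    also have "\<dots> = (if n = m then 1 else 0) + c2 * (if n < m then Gr2 (real m - real n - 1) else 0)"
      using that m by (subst ind_sum2) (auto simp: Gr2_def of_nat_diff)
    finally show ?thesis .
  qed
  have Rc: "R i = H i - H (Suc i)" for i
    unfolding R_def right_fdiff_def H_def \<nu>2_def sucr by simp
  define Ps where "Ps n = left_fsum a \<nu>2 Wf (a + real n)" for n
  have Psc: "Ps n = LW n + c2 * (\<Sum>i<n. Gr2 (real n - real i - 1) * LW i)" for n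
    unfolding Ps_def lfs_at LW_def c2_def Gr2_def ..
  have S2: "(\<Sum>i<k. LW i * (H i - H (Suc i))) = Ps m - Ps (m - 1)"
    by (rule sbp2[where H=H and P=Ps and W=LW and c=c2 and Gr=Gr2, OF m Hc Psc])
  have Wpart: "(\<Sum>i<k. LW i * R i) = left_fdiff a \<beta> Wf (a + real j)"
    unfolding Rc S2 left_fdiff_def using m by (simp add: Ps_def \<nu>2_def sucr m_def)
  have final: "LU j + right_fdiff (a + real k - 1) \<alpha> Vf (a + real j) + left_fdiff a \<beta> Wf (a + real j) = 0"
    using \<open>D = 0\<close> Dsplit Upart Vpart Wpart by simp
  then show "let t = a + real j in
           Lu t (yt (t + 1)) (left_fdiff a \<alpha> yt t) (right_fdiff (a + real k) \<beta> yt t)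
         + right_fdiff (a + real k - 1) \<alpha>
             (\<lambda>s. Lv s (yt (s + 1)) (left_fdiff a \<alpha> yt s) (right_fdiff (a + real k) \<beta> yt s)) t
         + left_fdiff a \<beta>
             (\<lambda>s. Lw s (yt (s + 1)) (left_fdiff a \<alpha> yt s) (right_fdiff (a + real k) \<beta> yt s)) t
         = 0"
    by (simp add: Let_def LU_def Uf_def Vf_def Wf_def)
qed


end
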